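(* Let $T$ be a finite nonempty set with a metric $\mathrm{dist}$, let $\Gamma:\mathbb{R}\to[0,1]$ be nondecreasing and subadditive with $\Gamma(x)=0$ iff $x=0$, and set $\gamma_{uv}=\Gamma(\mathrm{dist}(u,v))$ for $u,v\in T$. Let $\widehat\phi\in\mathbb{R}^{T}$, $\delta>0$, $$\mathcal{U}_{\mathrm{SB}}=\{\phi\in[0,1]^{T}:\ |\phi_v-\widehat\phi_v|\le\delta\ \ \forall v\in T,\ \ |\phi_v-\phi_u|\le\gamma_{vu}\ \ \forall u,v\in T\},$$ assumed nonempty, and let $\underline\phi_v=\max_{u\in T}\{\underline\phi^0_u-\gamma_{uv}\}$, $\bar\phi_v=\min_{u\in T}\{\bar\phi^0_u+\gamma_{vu}\}$ for $v\in T$, where $\underline\phi^0_u=\max\{0,\widehat\phi_u-\delta\}$ and $\bar\phi^0_u=\min\{1,\widehat\phi_u+\delta\}$. Then for all $u,v\in T$, $$P_{\{v,u\}}(\mathcal{U}_{\mathrm{SB}})=\{(\phi_v,\phi_u):\ \underline\phi_v\le\phi_v\le\bar\phi_v,\ \ \underline\phi_u\le\phi_u\le\bar\phi_u,\ \ |\phi_v-\phi_u|\le\gamma_{vu}\}.$$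
   Context: For $S\subseteq\mathbb{R}^{T}$ and $I\subseteq T$, $P_I(S)=\{\phi_I:\phi\in S\}$ denotes the projection of $S$ onto the coordinates in $I$. *)

theory Defs
  imports "HOL-Analysis.Analysis"
begin

definition proj :: "'a set \<Rightarrow> ('a \<Rightarrow> real) set \<Rightarrow> ('a \<Rightarrow> real) set" where
  "proj I S = (\<lambda>\<phi>. restrict \<phi> I) ` S"

definition U_SB :: "'a set \<Rightarrow> ('a \<Rightarrow> 'a \<Rightarrow> real) \<Rightarrow> (real \<Rightarrow> real) \<Rightarrow> ('a \<Rightarrow> real) \<Rightarrow> real
    \<Rightarrow> ('a \<Rightarrow> real) set" where
  "U_SB T d Gam phih \<delta> =
     {\<phi> \<in> extensional T. (\<forall>v\<in>T. 0 \<le> \<phi> v \<and> \<phi> v \<le> 1) \<and>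
        (\<forall>v\<in>T. \<bar>\<phi> v - phih v\<bar> \<le> \<delta>) \<and>
        (\<forall>u\<in>T. \<forall>v\<in>T. \<bar>\<phi> v - \<phi> u\<bar> \<le> Gam (d v u))}"

definition lo0 :: "('a \<Rightarrow> real) \<Rightarrow> real \<Rightarrow> 'a \<Rightarrow> real" where
  "lo0 phih \<delta> u = max 0 (phih u - \<delta>)"

definition up0 :: "('a \<Rightarrow> real) \<Rightarrow> real \<Rightarrow> 'a \<Rightarrow> real" where
  "up0 phih \<delta> u = min 1 (phih u + \<delta>)"

definition lo :: "'a set \<Rightarrow> ('a \<Rightarrow> 'a \<Rightarrow> real) \<Rightarrow> (real \<Rightarrow> real) \<Rightarrow> ('a \<Rightarrow> real) \<Rightarrow> real
    \<Rightarrow> 'a \<Rightarrow> real" where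
  "lo T d Gam phih \<delta> v = Max ((\<lambda>u. lo0 phih \<delta> u - Gam (d u v)) ` T)"

definition up :: "'a set \<Rightarrow> ('a \<Rightarrow> 'a \<Rightarrow> real) \<Rightarrow> (real \<Rightarrow> real) \<Rightarrow> ('a \<Rightarrow> real) \<Rightarrow> real
    \<Rightarrow> 'a \<Rightarrow> real" where
  "up T d Gam phih \<delta> v = Min ((\<lambda>u. up0 phih \<delta> u + Gam (d v u)) ` T)"

end

theory Submission
  imports Defs
begin

theorem proposition2p2:
  fixes T :: "'a set" and d :: "'a \<Rightarrow> 'a \<Rightarrow> real" and Gam :: "real \<Rightarrow> real"
    and phih :: "'a \<Rightarrow> real" and \<delta> :: real and u v :: 'a
  assumes "finite T" and "T \<noteq> {}"
    and d_zero: "\<And>x y. x \<in> T \<Longrightarrow> y \<in> T \<Longrightarrow> d x y = 0 \<longleftrightarrow> x = y"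
    and d_nonneg: "\<And>x y. x \<in> T \<Longrightarrow> y \<in> T \<Longrightarrow> 0 \<le> d x y"
    and d_sym: "\<And>x y. x \<in> T \<Longrightarrow> y \<in> T \<Longrightarrow> d x y = d y x"
    and d_tri: "\<And>x y z. x \<in> T \<Longrightarrow> y \<in> T \<Longrightarrow> z \<in> T \<Longrightarrow> d x z \<le> d x y + d y z"
    and Gam_range: "\<And>x. 0 \<le> x \<Longrightarrow> 0 \<le> Gam x \<and> Gam x \<le> 1"
    and Gam_mono: "\<And>x y. 0 \<le> x \<Longrightarrow> x \<le> y \<Longrightarrow> Gam x \<le> Gam y"
    and Gam_subadd: "\<And>x y. 0 \<le> x \<Longrightarrow> 0 \<le> y \<Longrightarrow> Gam (x + y) \<le> Gam x + Gam y"
    and Gam_zero: "\<And>x. 0 \<le> x \<Longrightarrow> Gam x = 0 \<longleftrightarrow> x = 0"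
    and "\<delta> > 0"
    and "U_SB T d Gam phih \<delta> \<noteq> {}"
    and "u \<in> T" and "v \<in> T"
  shows "proj {v, u} (U_SB T d Gam phih \<delta>) =
    {\<psi> \<in> extensional {v, u}.
       lo T d Gam phih \<delta> v \<le> \<psi> v \<and> \<psi> v \<le> up T d Gam phih \<delta> v \<and>
       lo T d Gam phih \<delta> u \<le> \<psi> u \<and> \<psi> u \<le> up T d Gam phih \<delta> u \<and>
       \<bar>\<psi> v - \<psi> u\<bar> \<le> Gam (d v u)}"
proof -
  define g where "g x y = Gam (d x y)" for x y
  define L where "L = lo T d Gam phih \<delta>"
  define U where "U = up T d Gam phih \<delta>"
  define l0 where "l0 = lo0 phih \<delta>"
  define u0 where "u0 = up0 phih \<delta>"
  note fin = \<open>finite T\<close>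
  have g0: "x \<in> T \<Longrightarrow> g x x = 0" for x using Gam_zero[of 0] d_zero[of x x] by (simp add: g_def)
  have gsym: "x \<in> T \<Longrightarrow> y \<in> T \<Longrightarrow> g x y = g y x" for x y by (simp add: g_def d_sym)
  have gtri: "x \<in> T \<Longrightarrow> y \<in> T \<Longrightarrow> z \<in> T \<Longrightarrow> g x z \<le> g x y + g y z" for x y z
  proof -
    assume a: "x \<in> T" "y \<in> T" "z \<in> T"
    have "Gam (d x z) \<le> Gam (d x y + d y z)"
      using Gam_mono d_tri[OF a] d_nonneg a by simp
    also have "\<dots> \<le> Gam (d x y) + Gam (d y z)" using Gam_subadd d_nonneg a by simp
    finally show ?thesis by (simp add: g_def)
  qed
  have L1: "x \<in> T \<Longrightarrow> l0 x - g x w \<le> L w" for x w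
    unfolding L_def lo_def l0_def g_def using fin by (intro Max_ge) auto
  have L2: "\<exists>x\<in>T. L w = l0 x - g x w" for w
  proof -
    have "L w \<in> (\<lambda>x. l0 x - g x w) ` T"
      unfolding L_def lo_def l0_def g_def using fin \<open>T \<noteq> {}\<close> by (intro Max_in) auto
    then show ?thesis by auto
  qed
  have U1: "x \<in> T \<Longrightarrow> U w \<le> u0 x + g w x" for x w
    unfolding U_def up_def u0_def g_def using fin by (intro Min_le) auto
  have U2: "\<exists>x\<in>T. U w = u0 x + g w x" for w
  proof -
    have "U w \<in> (\<lambda>x. u0 x + g w x) ` T"
      unfolding U_def up_def u0_def g_def using fin \<open>T \<noteq> {}\<close> by (intro Min_in) auto
    then show ?thesis by auto
  qed
  have USB: "\<phi> \<in> U_SB T d Gam phih \<delta> \<longleftrightarrow> \<phi> \<in> extensional T \<and> (\<forall>v\<in>T. 0 \<le> \<phi> v \<and> \<phi> v \<le> 1) \<and>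
        (\<forall>v\<in>T. \<bar>\<phi> v - phih v\<bar> \<le> \<delta>) \<and> (\<forall>u\<in>T. \<forall>v\<in>T. \<bar>\<phi> v - \<phi> u\<bar> \<le> g v u)" for \<phi>
    by (simp add: U_SB_def g_def)
  have l0le: "\<phi> \<in> U_SB T d Gam phih \<delta> \<Longrightarrow> w \<in> T \<Longrightarrow> l0 w \<le> \<phi> w" for \<phi> w
    unfolding USB l0_def lo0_def by (smt (verit))
  have u0ge: "\<phi> \<in> U_SB T d Gam phih \<delta> \<Longrightarrow> w \<in> T \<Longrightarrow> \<phi> w \<le> u0 w" for \<phi> w
    unfolding USB u0_def up0_def by (smt (verit))
  obtain \<phi>0 where p0: "\<phi>0 \<in> U_SB T d Gam phih \<delta>" using assms(12) by blast
  have Lup: "w \<in> T \<Longrightarrow> L w \<le> u0 w" for w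
  proof -
    assume w: "w \<in> T"
    obtain x where x: "x \<in> T" "L w = l0 x - g x w" using L2 by blast
    have "l0 x \<le> \<phi>0 x" using l0le[OF p0 x(1)] .
    moreover have "\<phi>0 x - \<phi>0 w \<le> g w x" using p0 w x(1) unfolding USB by force
    moreover have "\<phi>0 w \<le> u0 w" using u0ge[OF p0 w] .
    ultimately show ?thesis using x gsym[OF x(1) w] by linarith
  qed
  have l0L: "w \<in> T \<Longrightarrow> l0 w \<le> L w" for w using L1[of w w] g0[of w] by simp
  have Llip: "w \<in> T \<Longrightarrow> w' \<in> T \<Longrightarrow> L w \<le> L w' + g w w'" for w w'
  proof -
    assume w: "w \<in> T" "w' \<in> T"
    obtain x where x: "x \<in> T" "L w = l0 x - g x w" using L2 by blast
    have "g x w' \<le> g x w + g w w'" using gtri x(1) w by blast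
    then show ?thesis using x L1[OF x(1), of w'] by linarith
  qed
  show ?thesis (is "?P = ?R")
  proof
    show "?P \<subseteq> ?R"
    proof
      fix \<psi> assume "\<psi> \<in> proj {v, u} (U_SB T d Gam phih \<delta>)"
      then obtain \<phi> where p: "\<phi> \<in> U_SB T d Gam phih \<delta>" and ps: "\<psi> = restrict \<phi> {v,u}"
        unfolding proj_def by blast
      have lo: "w \<in> T \<Longrightarrow> L w \<le> \<phi> w" for w
      proof -
        assume w: "w \<in> T"
        obtain x where x: "x \<in> T" "L w = l0 x - g x w" using L2 by blast
        have "\<phi> x - \<phi> w \<le> g x w" using p w x(1) unfolding USB by force
        then show ?thesis using x l0le[OF p x(1)] by linarith
      qed
      have hi: "w \<in> T \<Longrightarrow> \<phi> w \<le> U w" for w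
      proof -
        assume w: "w \<in> T"
        obtain x where x: "x \<in> T" "U w = u0 x + g w x" using U2 by blast
        have "\<phi> w - \<phi> x \<le> g w x" using p w x(1) unfolding USB by force
        then show ?thesis using x u0ge[OF p x(1)] by linarith
      qed
      have "\<bar>\<phi> v - \<phi> u\<bar> \<le> g v u" using p assms(13,14) unfolding USB by blast
      then show "\<psi> \<in> {\<psi> \<in> extensional {v, u}.
       lo T d Gam phih \<delta> v \<le> \<psi> v \<and> \<psi> v \<le> up T d Gam phih \<delta> v \<and>
       lo T d Gam phih \<delta> u \<le> \<psi> u \<and> \<psi> u \<le> up T d Gam phih \<delta> u \<and>
       \<bar>\<psi> v - \<psi> u\<bar> \<le> Gam (d v u)}"
        using lo hi assms(13,14) ps unfolding L_def U_def g_def by auto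
    qed
  next
    show "?R \<subseteq> ?P"
    proof
      fix \<psi> assume "\<psi> \<in> {\<psi> \<in> extensional {v, u}.
       lo T d Gam phih \<delta> v \<le> \<psi> v \<and> \<psi> v \<le> up T d Gam phih \<delta> v \<and>
       lo T d Gam phih \<delta> u \<le> \<psi> u \<and> \<psi> u \<le> up T d Gam phih \<delta> u \<and>
       \<bar>\<psi> v - \<psi> u\<bar> \<le> Gam (d v u)}"
      then have ex: "\<psi> \<in> extensional {v,u}" and a1: "L v \<le> \<psi> v" and a2: "\<psi> v \<le> U v"
        and a3: "L u \<le> \<psi> u" and a4: "\<psi> u \<le> U u" and a5: "\<bar>\<psi> v - \<psi> u\<bar> \<le> g v u"
        unfolding L_def U_def g_def by auto
      define f where "f w = max (L w) (max (\<psi> v - g v w) (\<psi> u - g u w))" for w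
      define \<phi> where "\<phi> = restrict f T"
      have fv: "f v = \<psi> v" using a1 a5 g0 assms(13,14) gsym[OF assms(13,14)] unfolding f_def by auto
      have fu: "f u = \<psi> u" using a3 a5 g0 assms(13,14) gsym[OF assms(13,14)] unfolding f_def by auto
      have flo: "w \<in> T \<Longrightarrow> l0 w \<le> f w" for w using l0L unfolding f_def by force
      have fhi: "w \<in> T \<Longrightarrow> f w \<le> u0 w" for w
      proof -
        assume w: "w \<in> T"
        have "\<psi> v - g v w \<le> u0 w" using a2 U1[OF w, of v] gsym[OF w assms(14)] by linarith
        moreover have "\<psi> u - g u w \<le> u0 w" using a4 U1[OF w, of u] gsym[OF w assms(13)] by linarith
        ultimately show ?thesis using Lup[OF w] unfolding f_def by simp
      qed
      have flip: "w \<in> T \<Longrightarrow> w' \<in> T \<Longrightarrow> f w \<le> f w' + g w w'" for w w'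
      proof -
        assume w: "w \<in> T" "w' \<in> T"
        have "g v w' \<le> g v w + g w w'" using gtri w assms(14) by blast
        moreover have "g u w' \<le> g u w + g w w'" using gtri w assms(13) by blast
        ultimately show ?thesis using Llip[OF w] unfolding f_def by linarith
      qed
      have "\<phi> \<in> U_SB T d Gam phih \<delta>"
        unfolding USB
      proof (intro conjI ballI)
        show "\<phi> \<in> extensional T" unfolding \<phi>_def by simp
      next
        fix w assume w: "w \<in> T"
        show "0 \<le> \<phi> w" using flo[OF w] w unfolding \<phi>_def l0_def lo0_def by simp
        show "\<phi> w \<le> 1" using fhi[OF w] w unfolding \<phi>_def u0_def up0_def by simp
        show "\<bar>\<phi> w - phih w\<bar> \<le> \<delta>" using flo[OF w] fhi[OF w] w
          unfolding \<phi>_def u0_def up0_def l0_def lo0_def by (simp add: abs_le_iff)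
      next
        fix w w' assume w: "w' \<in> T" "w \<in> T"
        show "\<bar>\<phi> w - \<phi> w'\<bar> \<le> g w w'"
          using flip[of w w'] flip[of w' w] w gsym[of w w'] unfolding \<phi>_def by simp
      qed
      moreover have "\<psi> = restrict \<phi> {v,u}"
      proof
        fix x show "\<psi> x = restrict \<phi> {v, u} x"
          using ex fv fu assms(13,14) unfolding \<phi>_def extensional_def by auto
      qed
      ultimately show "\<psi> \<in> proj {v, u} (U_SB T d Gam phih \<delta>)" unfolding proj_def by blast
    qed
  qed
qed

end
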